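(* Let $\Lambda$ be a row-finite $k$-graph with no sources, and let $\{t_\lambda\}_{\lambda\in\Lambda}$ be a purely atomic representation of $C^*(\Lambda)$ on a Hilbert space $\mathcal H$, with associated projection valued measure $P$ on the Borel subsets of $\Lambda^\infty$. Then: (a) For every $\lambda\in\Lambda$ and every $\omega\in\Lambda^\infty$ with $r(\omega)=s(\lambda)$ we have $t_\lambda P(\{\omega\})t_\lambda^*=P(\{\lambda\omega\})$; and for every $\omega\in\Lambda^\infty$ and $n\in\mathbb N^k$ we have $t_{\omega(0,n)}^*P(\{\omega\})t_{\omega(0,n)}=P(\{\sigma^n(\omega)\})$. (b) For $n\in\mathbb N^k$, $\eta\in\Lambda^n$ and $\omega\in\Lambda^\infty$ with $\eta\neq\omega(0,n)$, we have $t_\eta^*P(\{\omega\})t_\eta=0$.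
   Context: A $k$-graph ($k\ge 1$) is a countable small category $\Lambda$ with a functor $d:\Lambda\to\mathbb N^k$ (the degree) satisfying the factorization property: whenever $d(\lambda)=m+n$ there are unique $\mu,\nu\in\Lambda$ with $\lambda=\mu\nu$, $d(\mu)=m$, $d(\nu)=n$. Morphisms are called paths, objects (identified with identity morphisms) form the vertex set $\Lambda^0$; $r,s$ denote range and source; $\Lambda^n=\{\lambda:d(\lambda)=n\}$ and $v\Lambda^n=\{\lambda\in\Lambda^n:r(\lambda)=v\}$. $\Lambda$ is row-finite if each $v\Lambda^n$ is finite, and has no sources if each $v\Lambda^n$ is nonempty. Let $\Omega_k$ be the $k$-graph with objects $\mathbb N^k$, morphisms $\{(p,q)\in\mathbb N^k\times\mathbb N^k:p\le q\}$, $r(p,q)=p$, $s(p,q)=q$, $d(p,q)=q-p$. An infinite path is a degree-preserving functor $x:\Omega_k\to\Lambda$; $\Lambda^\infty$ is the set of infinite paths, $r(x)=x(0,0)$, and $x(0,n)\in\Lambda^n$. The shift is $\sigma^m(x)(p,q)=x(p+m,q+m)$. For $\lambda\in\Lambda$ and $x\in\Lambda^\infty$ with $r(x)=s(\lambda)$, $\lambda x$ denotes the unique $y\in\Lambda^\infty$ with $y(0,d(\lambda))=\lambda$ and $\sigma^{d(\lambda)}(y)=x$. Cylinder sets are $Z(\lambda)=\{x\in\Lambda^\infty:x(0,d(\lambda))=\lambda\}$; they generate the Borel $\sigma$-algebra of $\Lambda^\infty$. A representation of $C^*(\Lambda)$ is a family $\{t_\lambda\}_{\lambda\in\Lambda}$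 of partial isometries on a Hilbert space with: (CK1) $\{t_v\}_{v\in\Lambda^0}$ mutually orthogonal projections; (CK2) $t_\lambda t_\eta=t_{\lambda\eta}$ when $s(\lambda)=r(\eta)$; (CK3) $t_\lambda^*t_\lambda=t_{s(\lambda)}$; (CK4) $t_v=\sum_{\lambda\in v\Lambda^n}t_\lambda t_\lambda^*$ for all $v,n$. The associated projection valued measure $P$ is the projection valued measure on the Borel sets of $\Lambda^\infty$ with $P(Z(\lambda))=t_\lambda t_\lambda^*$ for all $\lambda$. The representation is purely atomic if there is a Borel set $\Omega\subseteq\Lambda^\infty$ with $P(\Lambda^\infty\setminus\Omega)=0$, $P(\{\omega\})\ne0$ for all $\omega\in\Omega$, and $\sum_{\omega\in\Omega}P(\{\omega\})=\mathrm{Id}$ (strong operator topology). *)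

theory Defs
  imports "HOL-Analysis.Analysis" "HOL-Library.Function_Algebras"
begin

section \<open>Complex Hilbert spaces (the library has only real inner product spaces)\<close>

class chilbert = ab_group_add +
  fixes scaleC :: "complex \<Rightarrow> 'a \<Rightarrow> 'a" (infixr "*\<^sub>C" 75)
    and cinner :: "'a \<Rightarrow> 'a \<Rightarrow> complex"
  assumes scaleC_add_right: "a *\<^sub>C (x + y) = a *\<^sub>C x + a *\<^sub>C y"
    and scaleC_add_left: "(a + b) *\<^sub>C x = a *\<^sub>C x + b *\<^sub>C x"
    and scaleC_scaleC: "a *\<^sub>C (b *\<^sub>C x) = (a * b) *\<^sub>C x"
    and scaleC_one: "1 *\<^sub>C x = x"
    and cinner_add_right: "cinner x (y + z) = cinner x y + cinner x z"
    and cinner_scaleC_right: "cinner x (a *\<^sub>C y) = a * cinner x y"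
    and cinner_commute: "cinner y x = cnj (cinner x y)"
    and cinner_self_nonneg: "Im (cinner x x) = 0 \<and> Re (cinner x x) \<ge> 0"
    and cinner_self_eq_zero: "cinner x x = 0 \<longleftrightarrow> x = 0"
    and cinner_complete:
      "(\<forall>e>0. \<exists>N::nat. \<forall>m\<ge>N. \<forall>n\<ge>N. Re (cinner ((X::nat \<Rightarrow> 'a) m - X n) (X m - X n)) < e)
        \<Longrightarrow> \<exists>L. \<forall>e>0. \<exists>N. \<forall>n\<ge>N. Re (cinner (X n - L) (X n - L)) < e"

definition cnorm :: "'a::chilbert \<Rightarrow> real" where
  "cnorm x = sqrt (Re (cinner x x))"

definition bop :: "('a::chilbert \<Rightarrow> 'a) \<Rightarrow> bool" where
  "bop T \<longleftrightarrow> (\<forall>x y. T (x + y) = T x + T y) \<and> (\<forall>a x. T (a *\<^sub>C x) = a *\<^sub>C T x)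
     \<and> (\<exists>K. \<forall>x. cnorm (T x) \<le> K * cnorm x)"

definition adj :: "('a::chilbert \<Rightarrow> 'a) \<Rightarrow> ('a \<Rightarrow> 'a)" where
  "adj T = (SOME S. \<forall>x y. cinner (T x) y = cinner x (S y))"

definition is_proj :: "('a::chilbert \<Rightarrow> 'a) \<Rightarrow> bool" where
  "is_proj T \<longleftrightarrow> bop T \<and> T \<circ> T = T \<and> adj T = T"

text \<open>N^k is modelled as 'k \<Rightarrow> nat for a finite type 'k (with k = CARD('k)); order, plus and
  minus are pointwise. Vertices (objects) are identified with identity morphisms.\<close>

record ('p, 'k) kgraph =
  paths :: "'p set"
  vert  :: "'p set"
  rng   :: "'p \<Rightarrow> 'p"
  src   :: "'p \<Rightarrow> 'p"
  comp  :: "'p \<Rightarrow> 'p \<Rightarrow> 'p"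
  deg   :: "'p \<Rightarrow> 'k \<Rightarrow> nat"

definition is_kgraph :: "('p, 'k::finite) kgraph \<Rightarrow> bool" where
  "is_kgraph G \<longleftrightarrow>
     countable (paths G) \<and> vert G \<subseteq> paths G \<and>
     (\<forall>l\<in>paths G. rng G l \<in> vert G \<and> src G l \<in> vert G) \<and>
     (\<forall>v\<in>vert G. rng G v = v \<and> src G v = v) \<and>
     (\<forall>l\<in>paths G. \<forall>m\<in>paths G. src G l = rng G m \<longrightarrow>
        comp G l m \<in> paths G \<and> rng G (comp G l m) = rng G l \<and> src G (comp G l m) = src G m) \<and>
     (\<forall>l\<in>paths G. \<forall>m\<in>paths G. \<forall>n\<in>paths G. src G l = rng G m \<longrightarrow> src G m = rng G n \<longrightarrow>
        comp G (comp G l m) n = comp G l (comp G m n)) \<and>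
     (\<forall>l\<in>paths G. comp G (rng G l) l = l \<and> comp G l (src G l) = l) \<and>
     (\<forall>l\<in>paths G. \<forall>m\<in>paths G. src G l = rng G m \<longrightarrow>
        deg G (comp G l m) = deg G l + deg G m) \<and>
     (\<forall>v\<in>vert G. deg G v = 0) \<and>
     (\<forall>l\<in>paths G. \<forall>m n. deg G l = m + n \<longrightarrow>
        (\<exists>!(a, b). a \<in> paths G \<and> b \<in> paths G \<and> src G a = rng G b \<and>
                   l = comp G a b \<and> deg G a = m \<and> deg G b = n))"

definition row_finite :: "('p, 'k) kgraph \<Rightarrow> bool" where
  "row_finite G \<longleftrightarrow> (\<forall>v\<in>vert G. \<forall>n. finite {l\<in>paths G. rng G l = v \<and> deg G l = n})"

definition no_sources :: "('p, 'k) kgraph \<Rightarrow> bool" where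
  "no_sources G \<longleftrightarrow> (\<forall>v\<in>vert G. \<forall>n. {l\<in>paths G. rng G l = v \<and> deg G l = n} \<noteq> {})"

text \<open>Infinite paths: degree-preserving functors from Omega_k, i.e. x p q defined for p \<le> q
  (normalised to undefined elsewhere so that equality is extensional).\<close>

type_synonym ('p, 'k) ipath = "('k \<Rightarrow> nat) \<Rightarrow> ('k \<Rightarrow> nat) \<Rightarrow> 'p"

definition inf_paths :: "('p, 'k::finite) kgraph \<Rightarrow> ('p, 'k) ipath set" where
  "inf_paths G = {x.
     (\<forall>p q. p \<le> q \<longrightarrow> x p q \<in> paths G \<and> deg G (x p q) = q - p \<and>
                        rng G (x p q) = x p p \<and> src G (x p q) = x q q) \<and>
     (\<forall>p. x p p \<in> vert G) \<and>
     (\<forall>p q r. p \<le> q \<longrightarrow> q \<le> r \<longrightarrow> comp G (x p q) (x q r) = x p r) \<and>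
     (\<forall>p q. \<not> p \<le> q \<longrightarrow> x p q = undefined)}"

definition shift :: "('k \<Rightarrow> nat) \<Rightarrow> ('p, 'k) ipath \<Rightarrow> ('p, 'k) ipath" where
  "shift m x = (\<lambda>p q. x (p + m) (q + m))"

text \<open>lambda x: the unique infinite path y with y(0,d(lambda)) = lambda and shift^{d(lambda)} y = x\<close>
definition pcomp :: "('p, 'k::finite) kgraph \<Rightarrow> 'p \<Rightarrow> ('p, 'k) ipath \<Rightarrow> ('p, 'k) ipath" where
  "pcomp G l x = (THE y. y \<in> inf_paths G \<and> y 0 (deg G l) = l \<and> shift (deg G l) y = x)"

definition cyl :: "('p, 'k::finite) kgraph \<Rightarrow> 'p \<Rightarrow> ('p, 'k) ipath set" where
  "cyl G l = {x \<in> inf_paths G. x 0 (deg G l) = l}"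

definition path_borel :: "('p, 'k::finite) kgraph \<Rightarrow> ('p, 'k) ipath set set" where
  "path_borel G = sigma_sets (inf_paths G) (cyl G ` paths G)"

definition ck_rep :: "('p, 'k::finite) kgraph \<Rightarrow> ('p \<Rightarrow> 'a::chilbert \<Rightarrow> 'a) \<Rightarrow> bool" where
  "ck_rep G t \<longleftrightarrow>
     (\<forall>l\<in>paths G. bop (t l)) \<and>
     (\<forall>v\<in>vert G. is_proj (t v)) \<and>
     (\<forall>v\<in>vert G. \<forall>w\<in>vert G. v \<noteq> w \<longrightarrow> t v \<circ> t w = (\<lambda>_. 0)) \<and>
     (\<forall>l\<in>paths G. \<forall>m\<in>paths G. src G l = rng G m \<longrightarrow> t (comp G l m) = t l \<circ> t m) \<and>
     (\<forall>l\<in>paths G. adj (t l) \<circ> t l = t (src G l)) \<and>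
     (\<forall>v\<in>vert G. \<forall>n h. t v h = (\<Sum>l\<in>{l\<in>paths G. rng G l = v \<and> deg G l = n}. t l (adj (t l) h)))"

definition is_pvm :: "'x set \<Rightarrow> 'x set set \<Rightarrow> ('x set \<Rightarrow> 'a::chilbert \<Rightarrow> 'a) \<Rightarrow> bool" where
  "is_pvm X M P \<longleftrightarrow>
     (\<forall>A\<in>M. is_proj (P A)) \<and>
     P {} = (\<lambda>_. 0) \<and> P X = id \<and>
     (\<forall>A\<in>M. \<forall>B\<in>M. P (A \<inter> B) = P A \<circ> P B) \<and>
     (\<forall>A :: nat \<Rightarrow> 'x set. range A \<subseteq> M \<longrightarrow> disjoint_family A \<longrightarrow>
        (\<forall>h. (\<lambda>N. cnorm (P (\<Union>n. A n) h - (\<Sum>n<N. P (A n) h))) \<longlonglongrightarrow> 0))"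

definition assoc_pvm :: "('p, 'k::finite) kgraph \<Rightarrow> ('p \<Rightarrow> 'a::chilbert \<Rightarrow> 'a)
    \<Rightarrow> (('p, 'k) ipath set \<Rightarrow> 'a \<Rightarrow> 'a) \<Rightarrow> bool" where
  "assoc_pvm G t P \<longleftrightarrow> is_pvm (inf_paths G) (path_borel G) P \<and>
     (\<forall>l\<in>paths G. P (cyl G l) = t l \<circ> adj (t l))"

definition purely_atomic :: "('p, 'k::finite) kgraph \<Rightarrow> (('p, 'k) ipath set \<Rightarrow> 'a::chilbert \<Rightarrow> 'a) \<Rightarrow> bool" where
  "purely_atomic G P \<longleftrightarrow> (\<exists>Om\<in>path_borel G.
     P (inf_paths G - Om) = (\<lambda>_. 0) \<and>
     (\<forall>w\<in>Om. P {w} \<noteq> (\<lambda>_. 0)) \<and>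
     (\<forall>h. \<forall>e>0. \<exists>F. finite F \<and> F \<subseteq> Om \<and>
        (\<forall>F'. finite F' \<longrightarrow> F \<subseteq> F' \<longrightarrow> F' \<subseteq> Om \<longrightarrow> cnorm (h - (\<Sum>w\<in>F'. P {w} h)) < e)))"

end

theory Submission
  imports Defs
begin


lemma scaleC_zero_left[simp]: "0 *\<^sub>C (x::'a::chilbert) = 0"
proof -
  have "0 *\<^sub>C x = 0 *\<^sub>C x + 0 *\<^sub>C x" using scaleC_add_left[of 0 0 x] by simp
  then show ?thesis by simp
qed
lemma scaleC_zero_right[simp]: "a *\<^sub>C (0::'a::chilbert) = 0"
proof -
  have "a *\<^sub>C 0 = a *\<^sub>C 0 + a *\<^sub>C 0" using scaleC_add_right[of a 0 0] by simp
  then show ?thesis by simp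
qed
lemma scaleC_minus_right: "a *\<^sub>C (- x) = - (a *\<^sub>C x)"
  using scaleC_add_right[of a x "-x"] add.inverse_unique[of "a *\<^sub>C x" "a *\<^sub>C (- x)"] by simp
lemma scaleC_diff_right: "a *\<^sub>C (x - y) = a *\<^sub>C x - a *\<^sub>C y"
  using scaleC_add_right[of a x "-y"] scaleC_minus_right by simp
lemma scaleC_minus_left: "(- a) *\<^sub>C x = - (a *\<^sub>C x)"
  using scaleC_add_left[of a "-a" x] add.inverse_unique[of "a *\<^sub>C x" "(-a) *\<^sub>C x"] by simp
lemma scaleC_diff_left: "(a - b) *\<^sub>C x = a *\<^sub>C x - b *\<^sub>C x"
  using scaleC_add_left[of a "-b" x] scaleC_minus_left by simp
lemma cinner_zero_right[simp]: "cinner x 0 = 0"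
  using cinner_add_right[of x 0 0] by simp
lemma cinner_zero_left[simp]: "cinner 0 x = 0"
  using cinner_commute[of 0 x] by simp
lemma cinner_minus_right: "cinner x (- y) = - cinner x y"
proof -
  have "cinner x y + cinner x (- y) = 0" by (simp add: cinner_add_right[symmetric])
  then show ?thesis by (simp add: add_eq_0_iff)
qed
lemma cinner_diff_right: "cinner x (y - z) = cinner x y - cinner x z"
  using cinner_add_right[of x y "-z"] cinner_minus_right by simp
lemma cinner_add_left: "cinner (x + y) z = cinner x z + cinner y z"
  by (metis cinner_add_right cinner_commute complex_cnj_add)
lemma cinner_diff_left: "cinner (x - y) z = cinner x z - cinner y z"
  by (metis cinner_diff_right cinner_commute complex_cnj_diff)
lemma cinner_scaleC_left: "cinner (a *\<^sub>C x) y = cnj a * cinner x y"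
  by (metis cinner_scaleC_right cinner_commute complex_cnj_mult)
lemma cinner_self_real: "cinner x x = complex_of_real (Re (cinner x x))"
  using cinner_self_nonneg[of x] by (simp add: complex_eq_iff)

definition ns :: "'a::chilbert \<Rightarrow> real" where "ns x = Re (cinner x x)"

lemma ns_nonneg: "ns x \<ge> 0" using cinner_self_nonneg unfolding ns_def by auto
lemma ns_eq_0: "ns x = 0 \<longleftrightarrow> x = 0"
  by (metis cinner_self_eq_zero cinner_self_real ns_def of_real_eq_0_iff cinner_zero_left zero_complex.sel(1))
lemma cnorm_ns: "cnorm x = sqrt (ns x)" unfolding cnorm_def ns_def by simp
lemma cnorm_eq_0: "cnorm x = 0 \<longleftrightarrow> x = 0" by (simp add: cnorm_ns ns_eq_0)
lemma cinner_self_ns: "cinner x x = complex_of_real (ns x)"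
  unfolding ns_def by (rule cinner_self_real)

lemma ns_expand: "ns (x + y) = ns x + ns y + 2 * Re (cinner x y)"
proof -
  have "cinner (x+y) (x+y) = cinner x x + cinner y y + (cinner x y + cinner y x)"
    by (simp add: cinner_add_left cinner_add_right algebra_simps)
  moreover have "Re (cinner x y + cinner y x) = 2 * Re (cinner x y)"
    using cinner_commute[of y x] by simp
  ultimately show ?thesis unfolding ns_def by simp
qed

lemma ns_expand_diff: "ns (x - y) = ns x + ns y - 2 * Re (cinner x y)"
proof -
  have "cinner (x-y) (x-y) = cinner x x + cinner y y - (cinner x y + cinner y x)"
    by (simp add: cinner_diff_left cinner_diff_right algebra_simps)
  moreover have "Re (cinner x y + cinner y x) = 2 * Re (cinner x y)"
    using cinner_commute[of y x] by simp
  ultimately show ?thesis unfolding ns_def by simp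
qed

lemma parallelogram: "ns (x + y) + ns (x - y) = 2 * ns x + 2 * ns y"
  using ns_expand[of x y] ns_expand_diff[of x y] by simp

lemma ns_scaleC: "ns (a *\<^sub>C x) = (cmod a)^2 * ns x"
proof -
  have "cinner (a *\<^sub>C x) (a *\<^sub>C x) = (cnj a * a) * cinner x x"
    by (simp add: cinner_scaleC_left cinner_scaleC_right)
  also have "cnj a * a = complex_of_real ((cmod a)^2)"
    by (simp add: complex_norm_square[symmetric] mult.commute)
  also have "cinner x x = complex_of_real (ns x)" by (rule cinner_self_ns)
  finally have "cinner (a *\<^sub>C x) (a *\<^sub>C x) = complex_of_real ((cmod a)^2 * ns x)"
    by simp
  then show ?thesis unfolding ns_def by (metis Re_complex_of_real)
qed

lemma cauchy_schwarz: "(cmod (cinner x y))^2 \<le> ns x * ns y"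
proof (cases "y = 0")
  case True then show ?thesis by (simp add: ns_def)
next
  case False
  define N where "N = ns y"
  have "N \<noteq> 0" using False ns_eq_0[of y] unfolding N_def by simp
  then have Npos: "N > 0" using ns_nonneg[of y] unfolding N_def by linarith
  define c where "c = cinner y x / complex_of_real N"
  have yy: "cinner y y = complex_of_real N" unfolding N_def by (rule cinner_self_ns)
  have cyx: "cinner y x = cnj (cinner x y)" by (rule cinner_commute)
  have "cinner (x - c *\<^sub>C y) (x - c *\<^sub>C y)
      = cinner x x - c * cinner x y - (cnj c * cinner y x - cnj c * (c * cinner y y))"
    by (simp only: cinner_diff_left cinner_diff_right cinner_scaleC_left cinner_scaleC_right right_diff_distrib) (simp add: algebra_simps)
  also have "\<dots> = cinner x x - (cinner x y * cnj (cinner x y)) / complex_of_real N"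
  proof -
    have N0: "complex_of_real N \<noteq> 0" using Npos by simp
    have cc: "cnj c = cinner x y / complex_of_real N" unfolding c_def cyx by simp
    have gen: "\<And>(M::complex) a z. M \<noteq> 0 \<Longrightarrow> a - cnj z / M * z - (z / M * cnj z - z / M * (cnj z / M * M)) = a - z * cnj z / M"
      by (simp add: field_simps)
    show ?thesis unfolding cc unfolding c_def yy cyx using gen[OF N0] .
  qed
  also have "\<dots> = cinner x x - complex_of_real ((cmod (cinner x y))^2 / N)"
    by (simp add: complex_norm_square[symmetric])
  finally have E: "cinner (x - c *\<^sub>C y) (x - c *\<^sub>C y) = cinner x x - complex_of_real ((cmod (cinner x y))^2 / N)" .
  have "ns (x - c *\<^sub>C y) = ns x - (cmod (cinner x y))^2 / N"
    unfolding ns_def E by (simp only: minus_complex.sel Re_complex_of_real)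
  with ns_nonneg[of "x - c *\<^sub>C y"] have "(cmod (cinner x y))^2 / N \<le> ns x" by linarith
  then have "(cmod (cinner x y))^2 \<le> ns x * N" using Npos by (simp only: pos_divide_le_eq)
  then show ?thesis unfolding N_def .
qed

lemma cnorm_sq: "(cnorm x)^2 = ns x"
  using ns_nonneg[of x] by (simp add: cnorm_ns)

lemma cnorm_nonneg: "cnorm x \<ge> 0" using ns_nonneg[of x] by (simp add: cnorm_ns)

lemma cmod_cinner_le: "cmod (cinner x y) \<le> cnorm x * cnorm y"
proof -
  have "(cmod (cinner x y))^2 \<le> (cnorm x * cnorm y)^2"
    unfolding power_mult_distrib cnorm_sq by (rule cauchy_schwarz)
  moreover have "cnorm x * cnorm y \<ge> 0" using cnorm_nonneg[of x] cnorm_nonneg[of y] by simp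
  ultimately show ?thesis by (rule power2_le_imp_le)
qed



lemma ns_minus: "ns (- x) = ns x"
  unfolding ns_def using cinner_minus_right[of "-x" x] cinner_minus_right[of x x]
  by (metis cinner_commute complex_cnj_minus minus_minus)

lemma ns_diff_commute: "ns (x - y) = ns (y - x)"
  using ns_minus[of "x - y"] by simp

lemma riesz:
  fixes f :: "'a::chilbert \<Rightarrow> complex"
  assumes add: "\<And>x y. f (x + y) = f x + f y"
    and hom: "\<And>a x. f (a *\<^sub>C x) = a * f x"
    and bnd: "\<And>x. cmod (f x) \<le> K * cnorm x"
  shows "\<exists>z. \<forall>x. f x = cinner z x"
proof (cases "\<forall>x. f x = 0")
  case True
  then show ?thesis by (intro exI[of _ 0]) simp
next
  case False
  then obtain u where fu: "f u \<noteq> 0" by blast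
  have f0: "f 0 = 0" using hom[of 0 0] by simp
  have fminus: "f (- x) = - f x" for x
    using add[of x "-x"] f0 by (simp add: add_eq_0_iff)
  have fdiff: "f (x - y) = f x - f y" for x y
    using add[of x "-y"] fminus[of y] by simp
  define C where "C = {x. f x = 1}"
  have u0: "(1 / f u) *\<^sub>C u \<in> C" unfolding C_def using fu hom by simp
  define d where "d = Inf (ns ` C)"
  have bdd: "bdd_below (ns ` C)" by (rule bdd_belowI[of _ 0]) (auto simp: ns_nonneg)
  have ne: "ns ` C \<noteq> {}" using u0 by blast
  have dle: "d \<le> ns x" if "x \<in> C" for x
    unfolding d_def using bdd that by (simp add: cInf_lower)
  have dnn: "d \<ge> 0" unfolding d_def using ne by (rule cInf_greatest) (auto simp: ns_nonneg)
  have "\<exists>x. x \<in> C \<and> ns x < d + 1 / (real n + 1)" for n :: nat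
  proof -
    have "Inf (ns ` C) < d + 1 / (real n + 1)" unfolding d_def by simp
    then obtain v where "v \<in> ns ` C" "v < d + 1 / (real n + 1)"
      using cInf_less_iff[OF ne bdd] by blast
    then show ?thesis by blast
  qed
  then obtain xs where xsC: "\<And>n. xs n \<in> C" and xsd: "\<And>n. ns (xs n) < d + 1 / (real n + 1)"
    by metis
  have fxs: "f (xs n) = 1" for n using xsC[of n] unfolding C_def by simp
  have sum_ge: "ns (xs n + xs m) \<ge> 4 * d" for n m
  proof -
    have "f ((1/2) *\<^sub>C (xs n + xs m)) = 1" using hom add fxs by simp
    then have "d \<le> ns ((1/2) *\<^sub>C (xs n + xs m))" using dle unfolding C_def by simp
    also have "\<dots> = ns (xs n + xs m) / 4" by (simp add: ns_scaleC power2_eq_square)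
    finally show ?thesis by simp
  qed
  have diff_le: "ns (xs n - xs m) < 2 / (real n + 1) + 2 / (real m + 1)" for n m
    using parallelogram[of "xs n" "xs m"] sum_ge[of n m] xsd[of n] xsd[of m] by linarith
  have cauchy: "\<forall>e>0. \<exists>N::nat. \<forall>m\<ge>N. \<forall>n\<ge>N. Re (cinner (xs m - xs n) (xs m - xs n)) < e"
  proof (intro allI impI)
    fix e :: real assume e: "e > 0"
    obtain N :: nat where N: "real N > 4 / e" using reals_Archimedean2 by blast
    have "4 / (real N + 1) < e"
    proof -
      have "4 / e < real N + 1" using N by linarith
      then show ?thesis using e by (simp add: field_simps)
    qed
    moreover have "2 / (real m + 1) \<le> 2 / (real N + 1)" if "m \<ge> N" for m
      using that by (simp add: frac_le)
    ultimately have "\<forall>m\<ge>N. \<forall>n\<ge>N. ns (xs m - xs n) < e"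
    proof (intro allI impI)
      fix m n assume mn: "m \<ge> N" "n \<ge> N"
      assume a1: "4 / (real N + 1) < e" and a2: "\<And>m. N \<le> m \<Longrightarrow> 2 / (real m + 1) \<le> 2 / (real N + 1)"
      show "ns (xs m - xs n) < e" using diff_le[of m n] a2[OF mn(1)] a2[OF mn(2)] a1 by linarith
    qed
    then show "\<exists>N::nat. \<forall>m\<ge>N. \<forall>n\<ge>N. Re (cinner (xs m - xs n) (xs m - xs n)) < e"
      unfolding ns_def by blast
  qed
  obtain L where L: "\<And>e. e > 0 \<Longrightarrow> \<exists>N. \<forall>n\<ge>N. ns (xs n - L) < e"
    using cinner_complete[OF cauchy] unfolding ns_def by blast
  have Kpos: "K > 0"
  proof -
    have "0 < cmod (f u)" using fu by simp
    also have "\<dots> \<le> K * cnorm u" by (rule bnd)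
    finally have "0 < K * cnorm u" .
    then show ?thesis using cnorm_nonneg[of u] by (simp add: zero_less_mult_iff)
  qed
  have fL: "f L = 1"
  proof (rule ccontr)
    assume nL: "f L \<noteq> 1"
    define del where "del = cmod (1 - f L)"
    have delpos: "del > 0" unfolding del_def using nL by simp
    obtain N where N: "\<forall>n\<ge>N. ns (xs n - L) < (del / K)^2"
      using L[of "(del/K)^2"] delpos Kpos by auto
    have "cnorm (xs N - L) < del / K"
    proof -
      have "ns (xs N - L) < (del / K)^2" using N by simp
      then have "sqrt (ns (xs N - L)) < sqrt ((del / K)^2)" by (rule real_sqrt_less_mono)
      then show ?thesis using delpos Kpos by (simp add: cnorm_ns)
    qed
    then have "K * cnorm (xs N - L) < del" using Kpos by (simp add: field_simps)
    moreover have "cmod (f (xs N - L)) = del" unfolding del_def fdiff fxs ..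
    ultimately show False using bnd[of "xs N - L"] by simp
  qed
  have LC: "L \<in> C" unfolding C_def using fL by simp
  have nsL: "ns L \<le> d"
  proof (rule field_le_epsilon)
    fix e :: real assume e: "e > 0"
    obtain N where N: "\<forall>n\<ge>N. ns (xs n - L) < e / 4" using L[of "e/4"] e by auto
    obtain M :: nat where M: "real M > 4 / e" using reals_Archimedean2 by blast
    define n where "n = max N M"
    have n1: "ns (xs n - L) < e / 4" using N n_def by simp
    have "4 / e < real n + 1" using M n_def by simp
    then have n2: "1 / (real n + 1) < e / 4" using e by (simp add: field_simps)
    have "f (2 *\<^sub>C xs n - L) = 1" using fdiff hom fxs fL by simp
    then have dl: "d \<le> ns (2 *\<^sub>C xs n - L)" using dle unfolding C_def by simp
    have two: "2 *\<^sub>C xs n = xs n + xs n" using scaleC_add_left[of 1 1 "xs n"] scaleC_one[of "xs n"] by simp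
    have e1: "xs n + (L - xs n) = L" by simp
    have e2: "xs n - (L - xs n) = 2 *\<^sub>C xs n - L" unfolding two by (simp add: algebra_simps)
    have "ns (xs n + (L - xs n)) + ns (xs n - (L - xs n)) = 2 * ns (xs n) + 2 * ns (L - xs n)"
      by (rule parallelogram)
    then have "ns L + ns (2 *\<^sub>C xs n - L) = 2 * ns (xs n) + 2 * ns (xs n - L)"
      unfolding e1 e2 ns_diff_commute[of L "xs n"] .
    then show "ns L \<le> d + e" using dl xsd[of n] n1 n2 by linarith
  qed
  have orth: "cinner L k = 0" if fk: "f k = 0" for k
  proof (rule ccontr)
    assume nz: "cinner L k \<noteq> 0"
    define z where "z = cinner L k"
    define a where "a = (cmod z)^2"
    have apos: "a > 0" unfolding a_def z_def using nz by simp
    define s where "s = 1 / (ns k + 1)"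
    have spos: "s > 0" unfolding s_def using ns_nonneg[of k] by simp
    have sk: "s * ns k < 1" unfolding s_def using ns_nonneg[of k] by (simp add: field_simps)
    define t where "t = complex_of_real s * cnj z"
    have "f (L - t *\<^sub>C k) = 1" using fdiff hom fL fk by simp
    then have "d \<le> ns (L - t *\<^sub>C k)" using dle unfolding C_def by simp
    also have "ns (L - t *\<^sub>C k) = ns L + ns (t *\<^sub>C k) - 2 * Re (cinner L (t *\<^sub>C k))"
      by (rule ns_expand_diff)
    also have "ns (t *\<^sub>C k) = s^2 * a * ns k"
      unfolding ns_scaleC t_def a_def using spos by (simp add: norm_mult power_mult_distrib)
    also have "cinner L (t *\<^sub>C k) = complex_of_real (s * a)"
      unfolding cinner_scaleC_right t_def a_def z_def[symmetric]
      by (simp add: complex_norm_square[symmetric] mult.assoc mult.commute[of "cnj z"])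
    finally have "d \<le> ns L + s^2 * a * ns k - 2 * (s * a)" by simp
    then have "0 \<le> s^2 * a * ns k - 2 * (s * a)" using nsL by linarith
    then have "0 \<le> (s * a) * (s * ns k - 2)" by (simp add: algebra_simps power2_eq_square)
    moreover have "s * a > 0" using spos apos by simp
    ultimately have "s * ns k - 2 \<ge> 0" by (simp add: zero_le_mult_iff)
    then show False using sk by linarith
  qed
  have L0: "L \<noteq> 0" using fL f0 by auto
  have nsLpos: "ns L \<noteq> 0" using L0 ns_eq_0[of L] by simp
  have main: "cinner L x = f x * complex_of_real (ns L)" for x
  proof -
    have "f (x - f x *\<^sub>C L) = 0" using fdiff hom fL by simp
    then have "cinner L (x - f x *\<^sub>C L) = 0" by (rule orth)
    then show ?thesis by (simp add: cinner_diff_right cinner_scaleC_right cinner_self_ns)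
  qed
  show ?thesis
  proof (intro exI allI)
    fix x
    have "cinner (complex_of_real (1 / ns L) *\<^sub>C L) x = complex_of_real (1 / ns L) * cinner L x"
      by (simp add: cinner_scaleC_left)
    also have "\<dots> = f x" unfolding main using nsLpos by (simp add: field_simps)
    finally show "f x = cinner (complex_of_real (1 / ns L) *\<^sub>C L) x" by simp
  qed
qed

definition is_adj :: "('a::chilbert \<Rightarrow> 'a) \<Rightarrow> ('a \<Rightarrow> 'a) \<Rightarrow> bool" where
  "is_adj T S \<longleftrightarrow> (\<forall>x y. cinner (T x) y = cinner x (S y))"

lemma adj_exists:
  assumes "bop T" shows "\<exists>S. is_adj T S"
proof -
  from assms obtain K where lin1: "\<And>x y. T (x + y) = T x + T y"
    and lin2: "\<And>a x. T (a *\<^sub>C x) = a *\<^sub>C T x" and K: "\<And>x. cnorm (T x) \<le> K * cnorm x"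
    unfolding bop_def by blast
  have "\<exists>z. \<forall>x. cinner (T x) y = cinner x z" for y
  proof -
    have "\<exists>z. \<forall>x. cinner y (T x) = cinner z x"
    proof (rule riesz[where K = "cnorm y * K"])
      show "cinner y (T (x1 + x2)) = cinner y (T x1) + cinner y (T x2)" for x1 x2
        by (simp add: lin1 cinner_add_right)
      show "cinner y (T (a *\<^sub>C x)) = a * cinner y (T x)" for a x
        by (simp add: lin2 cinner_scaleC_right)
      show "cmod (cinner y (T x)) \<le> cnorm y * K * cnorm x" for x
      proof -
        have "cmod (cinner y (T x)) \<le> cnorm y * cnorm (T x)" by (rule cmod_cinner_le)
        also have "\<dots> \<le> cnorm y * (K * cnorm x)"
          using K[of x] cnorm_nonneg[of y] by (rule mult_left_mono)
        finally show ?thesis by (simp add: mult.assoc)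
      qed
    qed
    then obtain z where z: "\<forall>x. cinner y (T x) = cinner z x" by blast
    show ?thesis
    proof (intro exI allI)
      fix x show "cinner (T x) y = cinner x z"
        using z cinner_commute[of "T x" y] cinner_commute[of x z] by simp
    qed
  qed
  then have "\<forall>y. \<exists>z. \<forall>x. cinner (T x) y = cinner x z" by blast
  then obtain S where "\<forall>y. \<forall>x. cinner (T x) y = cinner x (S y)" by metis
  then show ?thesis unfolding is_adj_def by blast
qed

lemma adj_is_adj: "bop T \<Longrightarrow> is_adj T (adj T)"
  unfolding adj_def is_adj_def using adj_exists[of T] unfolding is_adj_def
  by (rule someI_ex)

lemma is_adj_unique: assumes "is_adj T S1" "is_adj T S2" shows "S1 = S2"
proof
  fix y
  have "cinner x (S1 y - S2 y) = 0" for x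
    using assms unfolding is_adj_def by (simp add: cinner_diff_right)
  then have "cinner (S1 y - S2 y) (S1 y - S2 y) = 0" by blast
  then show "S1 y = S2 y" using cinner_self_eq_zero[of "S1 y - S2 y"] by simp
qed

lemma is_adj_sym: "is_adj T S \<Longrightarrow> is_adj S T"
  unfolding is_adj_def by (metis cinner_commute)

lemma is_adj_comp: "is_adj A A' \<Longrightarrow> is_adj B B' \<Longrightarrow> is_adj (A \<circ> B) (B' \<circ> A')"
  unfolding is_adj_def by simp

lemma is_adj_zero: "is_adj (\<lambda>_. 0) (\<lambda>_. 0)"
  unfolding is_adj_def by simp



lemma deg_le_add: "(m::'k \<Rightarrow> nat) \<le> m + n" by (simp add: le_fun_def)
lemma deg_sub_add: "(m::'k \<Rightarrow> nat) \<le> n \<Longrightarrow> m + (n - m) = n" by (simp add: le_fun_def fun_eq_iff)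
lemma deg_add_sub: "((m::'k \<Rightarrow> nat) + n) - m = n" by (simp add: fun_eq_iff)

context
  fixes G :: "('p, 'k::finite) kgraph"
  assumes kg: "is_kgraph G"
begin

lemma kg_rs: "l \<in> paths G \<Longrightarrow> rng G l \<in> vert G \<and> src G l \<in> vert G"
  using kg[unfolded is_kgraph_def, THEN conjunct2, THEN conjunct2, THEN conjunct1] by blast
lemma kg_vp: "v \<in> vert G \<Longrightarrow> v \<in> paths G"
  using kg[unfolded is_kgraph_def, THEN conjunct2, THEN conjunct1] by blast
lemma kg_vrs: "v \<in> vert G \<Longrightarrow> rng G v = v \<and> src G v = v"
  using kg[unfolded is_kgraph_def, THEN conjunct2, THEN conjunct2, THEN conjunct2, THEN conjunct1] by blast
lemma kg_comp: "l \<in> paths G \<Longrightarrow> m \<in> paths G \<Longrightarrow> src G l = rng G m \<Longrightarrow>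
   comp G l m \<in> paths G \<and> rng G (comp G l m) = rng G l \<and> src G (comp G l m) = src G m"
  using kg[unfolded is_kgraph_def, THEN conjunct2, THEN conjunct2, THEN conjunct2, THEN conjunct2, THEN conjunct1] by blast
lemma kg_assoc: "l \<in> paths G \<Longrightarrow> m \<in> paths G \<Longrightarrow> n \<in> paths G \<Longrightarrow> src G l = rng G m \<Longrightarrow> src G m = rng G n \<Longrightarrow>
   comp G (comp G l m) n = comp G l (comp G m n)"
  using kg[unfolded is_kgraph_def, THEN conjunct2, THEN conjunct2, THEN conjunct2, THEN conjunct2, THEN conjunct2, THEN conjunct1] by blast
lemma kg_id: "l \<in> paths G \<Longrightarrow> comp G (rng G l) l = l \<and> comp G l (src G l) = l"
  using kg[unfolded is_kgraph_def, THEN conjunct2, THEN conjunct2, THEN conjunct2, THEN conjunct2, THEN conjunct2, THEN conjunct2, THEN conjunct1] by blast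
lemma kg_deg: "l \<in> paths G \<Longrightarrow> m \<in> paths G \<Longrightarrow> src G l = rng G m \<Longrightarrow> deg G (comp G l m) = deg G l + deg G m"
  using kg[unfolded is_kgraph_def, THEN conjunct2, THEN conjunct2, THEN conjunct2, THEN conjunct2, THEN conjunct2, THEN conjunct2, THEN conjunct2, THEN conjunct1] by blast
lemma kg_degv: "v \<in> vert G \<Longrightarrow> deg G v = 0"
  using kg[unfolded is_kgraph_def, THEN conjunct2, THEN conjunct2, THEN conjunct2, THEN conjunct2, THEN conjunct2, THEN conjunct2, THEN conjunct2, THEN conjunct2, THEN conjunct1] by blast
lemma kg_fact: "l \<in> paths G \<Longrightarrow> deg G l = m + n \<Longrightarrow>
        (\<exists>!(a, b). a \<in> paths G \<and> b \<in> paths G \<and> src G a = rng G b \<and>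
                   l = comp G a b \<and> deg G a = m \<and> deg G b = n)"
  using kg[unfolded is_kgraph_def, THEN conjunct2, THEN conjunct2, THEN conjunct2, THEN conjunct2, THEN conjunct2, THEN conjunct2, THEN conjunct2, THEN conjunct2, THEN conjunct2] by blast

end

definition fpair :: "('p, 'k::finite) kgraph \<Rightarrow> 'p \<Rightarrow> ('k \<Rightarrow> nat) \<Rightarrow> 'p \<times> 'p" where
  "fpair G z m = (THE (a, b). a \<in> paths G \<and> b \<in> paths G \<and> src G a = rng G b \<and>
                   z = comp G a b \<and> deg G a = m \<and> deg G b = deg G z - m)"

definition pre where "pre G z m = fst (fpair G z m)"
definition suf where "suf G z m = snd (fpair G z m)"

definition mkpath :: "('p, 'k::finite) kgraph \<Rightarrow> (('k \<Rightarrow> nat) \<Rightarrow> 'p) \<Rightarrow> ('p, 'k) ipath" where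
  "mkpath G f = (\<lambda>p q. if p \<le> q then suf G (f q) p else undefined)"

context
  fixes G :: "('p, 'k::finite) kgraph"
  assumes kg: "is_kgraph G"
begin

lemma fpair_spec:
  assumes z: "z \<in> paths G" and m: "m \<le> deg G z"
  shows "pre G z m \<in> paths G \<and> suf G z m \<in> paths G \<and> src G (pre G z m) = rng G (suf G z m) \<and>
    z = comp G (pre G z m) (suf G z m) \<and> deg G (pre G z m) = m \<and> deg G (suf G z m) = deg G z - m"
proof -
  have "deg G z = m + (deg G z - m)" using deg_sub_add[OF m] by simp
  from kg_fact[OF kg z this] have ex: "\<exists>!p. case p of (a, b) \<Rightarrow> a \<in> paths G \<and> b \<in> paths G \<and> src G a = rng G b \<and>
                   z = comp G a b \<and> deg G a = m \<and> deg G b = deg G z - m" .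
  have "case fpair G z m of (a, b) \<Rightarrow> a \<in> paths G \<and> b \<in> paths G \<and> src G a = rng G b \<and>
                   z = comp G a b \<and> deg G a = m \<and> deg G b = deg G z - m"
    unfolding fpair_def by (rule theI'[OF ex])
  then show ?thesis unfolding pre_def suf_def by (simp add: case_prod_beta)
qed

lemma fpair_uniq:
  assumes a: "a \<in> paths G" and b: "b \<in> paths G" and ab: "src G a = rng G b" and m: "deg G a = m"
  shows "pre G (comp G a b) m = a \<and> suf G (comp G a b) m = b"
proof -
  let ?z = "comp G a b"
  have dz: "deg G ?z = deg G a + deg G b" using kg_deg[OF kg a b ab] .
  have z: "?z \<in> paths G" using kg_comp[OF kg a b ab] by blast
  have dz2: "deg G ?z = m + (deg G ?z - m)" using dz m by (simp add: deg_add_sub)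
  from kg_fact[OF kg z dz2] have ex: "\<exists>!p. case p of (a', b') \<Rightarrow> a' \<in> paths G \<and> b' \<in> paths G \<and> src G a' = rng G b' \<and>
                   ?z = comp G a' b' \<and> deg G a' = m \<and> deg G b' = deg G ?z - m" .
  have "fpair G ?z m = (a, b)" unfolding fpair_def
    by (rule the1_equality[OF ex]) (simp add: a b ab m dz deg_add_sub)
  then show ?thesis unfolding pre_def suf_def by simp
qed

lemma deg0_vert: assumes z: "z \<in> paths G" "deg G z = 0" shows "z \<in> vert G"
proof -
  have r: "rng G z \<in> vert G" "src G z \<in> vert G" using kg_rs[OF kg z(1)] by auto
  have "pre G (comp G (rng G z) z) 0 = rng G z"
    using fpair_uniq[OF kg_vp[OF kg r(1)] z(1)] kg_vrs[OF kg r(1)] kg_degv[OF kg r(1)] by simp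
  moreover have "pre G (comp G z (src G z)) 0 = z"
    using fpair_uniq[OF z(1) kg_vp[OF kg r(2)]] kg_vrs[OF kg r(2)] z(2) by simp
  ultimately show ?thesis using kg_id[OF kg z(1)] r by simp
qed

lemma pre_comp:
  assumes a: "a \<in> paths G" and b: "b \<in> paths G" and ab: "src G a = rng G b" and n: "n \<le> deg G a"
  shows "pre G (comp G a b) n = pre G a n \<and> suf G (comp G a b) n = comp G (suf G a n) b"
proof -
  note sp = fpair_spec[OF a n]
  have p1: "pre G a n \<in> paths G" and s1: "suf G a n \<in> paths G" and ps: "src G (pre G a n) = rng G (suf G a n)"
    and ae: "a = comp G (pre G a n) (suf G a n)" and dp: "deg G (pre G a n) = n" using sp by auto
  have s: "src G (suf G a n) = src G a"
    using kg_comp[OF kg p1 s1 ps] ae by simp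
  have sb: "src G (suf G a n) = rng G b" using s ab by simp
  have e: "comp G a b = comp G (pre G a n) (comp G (suf G a n) b)"
    using kg_assoc[OF kg p1 s1 b ps sb] ae by simp
  have c: "comp G (suf G a n) b \<in> paths G" "rng G (comp G (suf G a n) b) = rng G (suf G a n)"
    using kg_comp[OF kg s1 b sb] by auto
  show ?thesis using fpair_uniq[of "pre G a n" "comp G (suf G a n) b" n] sp c e by simp
qed

lemma pre_pre: assumes z: "z \<in> paths G" and nm: "n \<le> m" and m: "m \<le> deg G z"
  shows "pre G (pre G z m) n = pre G z n"
proof -
  note sp = fpair_spec[OF z m]
  have "pre G (comp G (pre G z m) (suf G z m)) n = pre G (pre G z m) n"
    using pre_comp[of "pre G z m" "suf G z m" n] sp nm by simp
  then show ?thesis using sp by simp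
qed

lemma suf_split: assumes z: "z \<in> paths G" and pq: "p \<le> q" and q: "q \<le> deg G z"
  shows "comp G (suf G (pre G z q) p) (suf G z q) = suf G z p"
proof -
  note sp = fpair_spec[OF z q]
  have "suf G (comp G (pre G z q) (suf G z q)) p = comp G (suf G (pre G z q) p) (suf G z q)"
    using pre_comp[of "pre G z q" "suf G z q" p] sp pq by simp
  then show ?thesis using sp by simp
qed

lemma suf_full: assumes z: "z \<in> paths G" shows "suf G z (deg G z) = src G z"
proof -
  have r: "src G z \<in> vert G" using kg_rs[OF kg z] by auto
  show ?thesis using fpair_uniq[OF z kg_vp[OF kg r]] kg_vrs[OF kg r] kg_id[OF kg z] by simp
qed

lemma suf_zero: assumes z: "z \<in> paths G" shows "suf G z 0 = z"
proof -
  have r: "rng G z \<in> vert G" using kg_rs[OF kg z] by auto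
  show ?thesis using fpair_uniq[OF kg_vp[OF kg r] z] kg_vrs[OF kg r] kg_id[OF kg z] kg_degv[OF kg r] by simp
qed

lemma mkpath_inf:
  assumes f: "\<And>n. f n \<in> paths G" "\<And>n. deg G (f n) = n"
    and compat: "\<And>n m. n \<le> m \<Longrightarrow> pre G (f m) n = f n"
  shows "mkpath G f \<in> inf_paths G" "\<And>n. mkpath G f 0 n = f n"
proof -
  let ?x = "mkpath G f"
  have xpq: "?x p q = suf G (f q) p" if "p \<le> q" for p q using that unfolding mkpath_def by simp
  have xpp: "?x p p = src G (f p)" for p using xpq[of p p] suf_full[OF f(1)[of p]] f(2)[of p] by simp
  have spq: "?x p q \<in> paths G \<and> deg G (?x p q) = q - p \<and> rng G (?x p q) = ?x p p \<and> src G (?x p q) = ?x q q"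
    if pq: "p \<le> q" for p q
  proof -
    note sp = fpair_spec[OF f(1)[of q], of p]
    have pq': "p \<le> deg G (f q)" using pq f(2) by simp
    note sp = sp[OF pq']
    have "src G (suf G (f q) p) = src G (f q)"
      using sp kg_comp[OF kg, of "pre G (f q) p" "suf G (f q) p"] by metis
    moreover have "rng G (suf G (f q) p) = src G (f p)" using sp compat[OF pq] by simp
    ultimately show ?thesis using sp xpq[OF pq] xpp f(2) by simp
  qed
  show "?x \<in> inf_paths G" unfolding inf_paths_def
  proof (intro CollectI conjI allI impI)
    show "p \<le> q \<Longrightarrow> ?x p q \<in> paths G" for p q using spq by blast
    show "p \<le> q \<Longrightarrow> deg G (?x p q) = q - p" for p q using spq by blast
    show "p \<le> q \<Longrightarrow> rng G (?x p q) = ?x p p" for p q using spq by blast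
    show "p \<le> q \<Longrightarrow> src G (?x p q) = ?x q q" for p q using spq by blast
    show "?x p p \<in> vert G" for p using xpp kg_rs[OF kg f(1)[of p]] by simp
    show "\<not> p \<le> q \<Longrightarrow> ?x p q = undefined" for p q unfolding mkpath_def by simp
    show "comp G (?x p q) (?x q r) = ?x p r" if "p \<le> q" "q \<le> r" for p q r
    proof -
      have "?x p q = suf G (pre G (f r) q) p" using xpq[OF that(1)] compat[OF that(2)] by simp
      moreover have "?x q r = suf G (f r) q" using xpq[OF that(2)] .
      moreover have "?x p r = suf G (f r) p" using xpq that by (meson order_trans)
      ultimately show ?thesis using suf_split[OF f(1)[of r] that(1)] that(2) f(2) by simp
    qed
  qed
  show "?x 0 n = f n" for n using xpq[of 0 n] suf_zero[OF f(1)] by simp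
qed

lemma inf_props:
  assumes x: "x \<in> inf_paths G"
  shows "\<And>p q. p \<le> q \<Longrightarrow> x p q \<in> paths G \<and> deg G (x p q) = q - p \<and> rng G (x p q) = x p p \<and> src G (x p q) = x q q"
    and "\<And>p. x p p \<in> vert G"
    and "\<And>p q r. p \<le> q \<Longrightarrow> q \<le> r \<Longrightarrow> comp G (x p q) (x q r) = x p r"
    and "\<And>p q. \<not> p \<le> q \<Longrightarrow> x p q = undefined"
  using x unfolding inf_paths_def by blast+

lemma inf_pre: assumes x: "x \<in> inf_paths G" and nm: "n \<le> m"
  shows "pre G (x 0 m) n = x 0 n"
proof -
  note ip = inf_props[OF x]
  have "x 0 m = comp G (x 0 n) (x n m)" using ip(3)[of 0 n m] nm by simp
  moreover have "pre G (comp G (x 0 n) (x n m)) n = x 0 n"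
    using fpair_uniq[of "x 0 n" "x n m" n] ip(1)[of 0 n] ip(1)[of n m] nm by simp
  ultimately show ?thesis by simp
qed

lemma inf_mk: assumes x: "x \<in> inf_paths G" shows "x = mkpath G (\<lambda>n. x 0 n)"
proof (intro ext)
  fix p q
  note ip = inf_props[OF x]
  show "x p q = mkpath G (\<lambda>n. x 0 n) p q"
  proof (cases "p \<le> q")
    case True
    have "x 0 q = comp G (x 0 p) (x p q)" using ip(3)[of 0 p q] True by simp
    moreover have "suf G (comp G (x 0 p) (x p q)) p = x p q"
      using fpair_uniq[of "x 0 p" "x p q" p] ip(1)[of 0 p] ip(1)[of p q] True by simp
    ultimately show ?thesis unfolding mkpath_def using True by simp
  next
    case False then show ?thesis unfolding mkpath_def using ip(4) by simp
  qed
qed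

lemma inf_eq: assumes "x \<in> inf_paths G" "y \<in> inf_paths G" "\<And>n. x 0 n = y 0 n" shows "x = y"
proof -
  have "x 0 = y 0" using assms(3) by (rule ext)
  then show ?thesis using inf_mk[OF assms(1)] inf_mk[OF assms(2)] by simp
qed

lemma inf_eq2: assumes "x \<in> inf_paths G" "y \<in> inf_paths G" and e: "\<And>n. x 0 (n + D) = y 0 (n + D)"
  shows "x = y"
proof (rule inf_eq[OF assms(1,2)])
  fix n
  have "x 0 n = pre G (x 0 (n + D)) n" using inf_pre[OF assms(1), of n "n + D"] by (simp add: le_fun_def)
  also have "\<dots> = pre G (y 0 (n + D)) n" using e by simp
  also have "\<dots> = y 0 n" using inf_pre[OF assms(2), of n "n + D"] by (simp add: le_fun_def)
  finally show "x 0 n = y 0 n" .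
qed

lemma shift_inf: assumes x: "x \<in> inf_paths G" shows "shift n x \<in> inf_paths G"
proof -
  note ip = inf_props[OF x]
  have le: "(p + n \<le> q + n) = (p \<le> q)" for p q :: "'k \<Rightarrow> nat" by (simp add: le_fun_def)
  have d: "(q + n) - (p + n) = q - p" for p q :: "'k \<Rightarrow> nat" by (simp add: fun_eq_iff)
  show ?thesis unfolding inf_paths_def shift_def
    using ip le d by (simp add: add_right_mono)
qed

lemma pcomp_props:
  assumes l: "l \<in> paths G" and w: "w \<in> inf_paths G" and ws: "w 0 0 = src G l"
  shows "pcomp G l w \<in> inf_paths G" "pcomp G l w 0 (deg G l) = l" "shift (deg G l) (pcomp G l w) = w"
    "\<And>n. pcomp G l w 0 (n + deg G l) = comp G l (w 0 n)"
    "\<And>y. y \<in> inf_paths G \<Longrightarrow> y 0 (deg G l) = l \<Longrightarrow> shift (deg G l) y = w \<Longrightarrow> y = pcomp G l w"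
proof -
  note ip = inf_props[OF w]
  let ?d = "deg G l"
  have wn: "w 0 n \<in> paths G" "rng G (w 0 n) = src G l" "deg G (w 0 n) = n" for n
    using ip(1)[of 0 n] ws by auto
  have cl: "comp G l (w 0 n) \<in> paths G" "deg G (comp G l (w 0 n)) = ?d + n" for n
    using kg_comp[OF kg l wn(1)] kg_deg[OF kg l wn(1)] wn by auto
  have split: "comp G l (w 0 m) = comp G (comp G l (w 0 n)) (w n m)" if "n \<le> m" for n m
  proof -
    have "w 0 m = comp G (w 0 n) (w n m)" using ip(3)[of 0 n m] that by simp
    moreover have "src G (w 0 n) = rng G (w n m)" using ip(1)[of 0 n] ip(1)[of n m] that by simp
    ultimately show ?thesis using kg_assoc[OF kg l wn(1) ip(1)[of n m, THEN conjunct1]] that wn by simp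
  qed
  have srcc: "src G (comp G l (w 0 n)) = rng G (w n m)" if "n \<le> m" for n m
    using kg_comp[OF kg l wn(1)] wn ip(1)[of 0 n] ip(1)[of n m] that by simp
  define f where "f n = pre G (comp G l (w 0 n)) n" for n
  have fn: "f n \<in> paths G" "deg G (f n) = n" for n
    using fpair_spec[OF cl(1)[of n], of n] cl(2) unfolding f_def by (auto simp: le_fun_def)
  have compat: "pre G (f m) n = f n" if "n \<le> m" for n m
  proof -
    have "pre G (f m) n = pre G (comp G l (w 0 m)) n"
      unfolding f_def using pre_pre[OF cl(1)[of m] that] cl(2) by (simp add: le_fun_def)
    also have "\<dots> = pre G (comp G l (w 0 n)) n"
    proof -
      have nle: "n \<le> deg G (comp G l (w 0 n))" using cl(2)[of n] by (simp add: le_fun_def)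
      show ?thesis using that split[OF that] pre_comp[OF cl(1)[of n] ip(1)[of n m, THEN conjunct1] srcc[OF that] nle]
        by simp
    qed
    finally show ?thesis unfolding f_def .
  qed
  define y where "y = mkpath G f"
  have yinf: "y \<in> inf_paths G" and y0: "\<And>n. y 0 n = f n"
    unfolding y_def using mkpath_inf[OF fn compat] by auto
  have fd: "f (n + ?d) = comp G l (w 0 n)" for n
  proof -
    have "f (n + ?d) = pre G (comp G (comp G l (w 0 n)) (w n (n + ?d))) (n + ?d)"
      unfolding f_def using split[of n "n + ?d"] by (simp add: le_fun_def)
    also have "\<dots> = comp G l (w 0 n)"
      using fpair_uniq[OF cl(1)[of n] ip(1)[of n "n + ?d", THEN conjunct1] srcc[of n "n + ?d"]] cl(2)
      by (simp add: le_fun_def add.commute)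
    finally show ?thesis .
  qed
  have yd: "y 0 ?d = l"
  proof -
    have "y 0 ?d = pre G (comp G l (w 0 ?d)) ?d" using y0 unfolding f_def by simp
    then show ?thesis using fpair_uniq[OF l wn(1)] wn(2) by simp
  qed
  have yshift: "shift ?d y = w"
  proof (intro ext)
    fix p q
    show "shift ?d y p q = w p q"
    proof (cases "p \<le> q")
      case True
      have "shift ?d y p q = suf G (f (q + ?d)) (p + ?d)"
        unfolding shift_def y_def mkpath_def using True by (simp add: le_fun_def)
      also have "\<dots> = suf G (comp G l (w 0 q)) (p + ?d)" using fd by simp
      also have "\<dots> = suf G (comp G (comp G l (w 0 p)) (w p q)) (p + ?d)" using split[OF True] by simp
      also have "\<dots> = w p q"
        using True fpair_uniq[OF cl(1)[of p] ip(1)[of p q, THEN conjunct1] srcc[OF True]] cl(2)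
        by (simp add: add.commute)
      finally show ?thesis .
    next
      case False
      then have "\<not> p + ?d \<le> q + ?d" by (simp add: le_fun_def)
      then show ?thesis unfolding shift_def y_def mkpath_def using ip(4) False by simp
    qed
  qed
  have uniq: "y' = y" if y': "y' \<in> inf_paths G" "y' 0 ?d = l" "shift ?d y' = w" for y'
  proof (rule inf_eq2[OF y'(1) yinf, of ?d])
    fix n
    note ip' = inf_props[OF y'(1)]
    have e1: "y' 0 (n + ?d) = comp G (y' 0 ?d) (y' ?d (n + ?d))" using ip'(3)[of 0 ?d "n + ?d"] by (simp add: le_fun_def)
    have e2: "y' ?d (n + ?d) = w 0 n" using fun_cong[OF fun_cong[OF y'(3), of 0], of n] unfolding shift_def by simp
    show "y' 0 (n + ?d) = y 0 (n + ?d)" using e1 e2 y'(2) y0 fd by simp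
  qed
  have pc: "pcomp G l w = y" unfolding pcomp_def
  proof (rule the_equality)
    show "y \<in> inf_paths G \<and> y 0 ?d = l \<and> shift ?d y = w" using yinf yd yshift by simp
    show "\<And>y'. y' \<in> inf_paths G \<and> y' 0 ?d = l \<and> shift ?d y' = w \<Longrightarrow> y' = y" using uniq by blast
  qed
  show "pcomp G l w \<in> inf_paths G" "pcomp G l w 0 ?d = l" "shift ?d (pcomp G l w) = w"
    using pc yinf yd yshift by auto
  show "pcomp G l w 0 (n + ?d) = comp G l (w 0 n)" for n using pc y0 fd by simp
  show "\<And>y'. y' \<in> inf_paths G \<Longrightarrow> y' 0 ?d = l \<Longrightarrow> shift ?d y' = w \<Longrightarrow> y' = pcomp G l w"
    using uniq pc by simp
qed

lemma pcomp_shift: assumes w: "w \<in> inf_paths G"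
  shows "pcomp G (w 0 n) (shift n w) = w" "w 0 n \<in> paths G" "shift n w 0 0 = src G (w 0 n)"
proof -
  note ip = inf_props[OF w]
  show wp: "w 0 n \<in> paths G" using ip(1)[of 0 n] by simp
  have dn: "deg G (w 0 n) = n" using ip(1)[of 0 n] by simp
  show s: "shift n w 0 0 = src G (w 0 n)" unfolding shift_def using ip(1)[of 0 n] by simp
  show "pcomp G (w 0 n) (shift n w) = w"
    using pcomp_props(5)[OF wp shift_inf[OF w] s w] dn by simp
qed

lemma singleton_borel: assumes w: "w \<in> inf_paths G" shows "{w} \<in> path_borel G"
proof -
  have cyl_sub: "cyl G ` paths G \<subseteq> Pow (inf_paths G)" unfolding cyl_def by auto
  have "(\<Inter>m::nat. cyl G (w 0 (\<lambda>_. m))) = {w}"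
  proof (intro equalityI subsetI)
    fix x assume x: "x \<in> (\<Inter>m::nat. cyl G (w 0 (\<lambda>_. m)))"
    have dm: "deg G (w 0 (\<lambda>_::'k. m)) = (\<lambda>_. m)" for m
      using inf_props(1)[OF w, of 0 "\<lambda>_. m"] by (simp add: le_fun_def)
    have xe: "x 0 (\<lambda>_. m) = w 0 (\<lambda>_. m)" "x \<in> inf_paths G" for m
      using x dm unfolding cyl_def by auto
    show "x \<in> {w}"
    proof (simp, rule inf_eq[OF xe(2) w])
      fix n :: "'k \<Rightarrow> nat"
      define m where "m = Max (range n)"
      have fin: "finite (range n)" by simp
      have nm: "n \<le> (\<lambda>_. m)" unfolding m_def le_fun_def using Max_ge[OF fin] by blast
      have "x 0 n = pre G (x 0 (\<lambda>_. m)) n" using inf_pre[OF xe(2) nm] by simp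
      also have "\<dots> = w 0 n" using xe(1) inf_pre[OF w nm] by simp
      finally show "x 0 n = w 0 n" .
    qed
  next
    fix x assume "x \<in> {w}"
    then show "x \<in> (\<Inter>m::nat. cyl G (w 0 (\<lambda>_. m)))"
      using w inf_props(1)[OF w] unfolding cyl_def by (auto simp: le_fun_def)
  qed
  moreover have "(\<Inter>m::nat. cyl G (w 0 (\<lambda>_. m))) \<in> path_borel G"
    unfolding path_borel_def
  proof (rule sigma_sets_Inter[OF cyl_sub])
    fix m :: nat
    show "cyl G (w 0 (\<lambda>_. m)) \<in> sigma_sets (inf_paths G) (cyl G ` paths G)"
      using inf_props(1)[OF w, of 0 "\<lambda>_. m"] by (auto simp: le_fun_def)
  qed
  ultimately show ?thesis by simp
qed

lemma cyl_borel: "l \<in> paths G \<Longrightarrow> cyl G l \<in> path_borel G"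
  unfolding path_borel_def by auto

lemma in_cyl: "x \<in> inf_paths G \<Longrightarrow> x 0 n \<in> paths G \<Longrightarrow> x \<in> cyl G (x 0 n)"
  unfolding cyl_def using inf_props(1) by (auto simp: le_fun_def)

end


lemma bop_zero: "bop T \<Longrightarrow> T 0 = 0"
proof -
  assume "bop T"
  then have "T (0 + 0) = T 0 + T 0" unfolding bop_def by blast
  then show ?thesis by simp
qed

lemma is_adj_S0: assumes "is_adj T S" shows "S 0 = 0"
proof -
  have "cinner x (S 0) = 0" for x using assms unfolding is_adj_def
    by (metis cinner_zero_right)
  then have "cinner (S 0) (S 0) = 0" by blast
  then show ?thesis using cinner_self_eq_zero[of "S 0"] by simp
qed

theorem proposition3p3:
  fixes G :: "('p, 'k::finite) kgraph"
    and t :: "'p \<Rightarrow> 'a::chilbert \<Rightarrow> 'a"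
    and P :: "('p, 'k) ipath set \<Rightarrow> 'a \<Rightarrow> 'a"
  assumes "is_kgraph G" and "row_finite G" and "no_sources G"
    and "ck_rep G t" and "assoc_pvm G t P" and "purely_atomic G P"
  shows "(\<forall>l\<in>paths G. \<forall>w\<in>inf_paths G. w 0 0 = src G l \<longrightarrow>
            t l \<circ> P {w} \<circ> adj (t l) = P {pcomp G l w})
       \<and> (\<forall>w\<in>inf_paths G. \<forall>n. adj (t (w 0 n)) \<circ> P {w} \<circ> t (w 0 n) = P {shift n w})
       \<and> (\<forall>n. \<forall>e\<in>paths G. \<forall>w\<in>inf_paths G. deg G e = n \<longrightarrow> e \<noteq> w 0 n \<longrightarrow>
            adj (t e) \<circ> P {w} \<circ> t e = (\<lambda>_. 0))"
proof -
  note kg = assms(1)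
  let ?X = "inf_paths G" and ?M = "path_borel G"
  note ck = assms(4)[unfolded ck_rep_def]
  have tbop: "\<And>l. l \<in> paths G \<Longrightarrow> bop (t l)" using ck[THEN conjunct1] by blast
  have tproj: "\<And>v. v \<in> vert G \<Longrightarrow> is_proj (t v)" using ck[THEN conjunct2, THEN conjunct1] by blast
  have tcomp: "\<And>l m. l \<in> paths G \<Longrightarrow> m \<in> paths G \<Longrightarrow> src G l = rng G m \<Longrightarrow> t (comp G l m) = t l \<circ> t m"
    using ck[THEN conjunct2, THEN conjunct2, THEN conjunct2, THEN conjunct1] by blast
  have tsrc: "\<And>l. l \<in> paths G \<Longrightarrow> adj (t l) \<circ> t l = t (src G l)"
    using ck[THEN conjunct2, THEN conjunct2, THEN conjunct2, THEN conjunct2, THEN conjunct1] by blast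
  note pv = assms(5)[unfolded assoc_pvm_def is_pvm_def]
  have Pproj: "\<And>A. A \<in> ?M \<Longrightarrow> is_proj (P A)" using pv[THEN conjunct1, THEN conjunct1] by blast
  have P0: "P {} = (\<lambda>_. 0)" using pv[THEN conjunct1, THEN conjunct2, THEN conjunct1] .
  have Pint: "\<And>A B. A \<in> ?M \<Longrightarrow> B \<in> ?M \<Longrightarrow> P (A \<inter> B) = P A \<circ> P B"
    using pv[THEN conjunct1, THEN conjunct2, THEN conjunct2, THEN conjunct2, THEN conjunct1] by blast
  have Pcyl: "\<And>l. l \<in> paths G \<Longrightarrow> P (cyl G l) = t l \<circ> adj (t l)"
    using pv[THEN conjunct2] by blast
  obtain Om where Om: "Om \<in> ?M" and OmP: "P (?X - Om) = (\<lambda>_. 0)"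
    and OmS: "\<And>h e. e > 0 \<Longrightarrow> \<exists>F. finite F \<and> F \<subseteq> Om \<and>
        (\<forall>F'. finite F' \<longrightarrow> F \<subseteq> F' \<longrightarrow> F' \<subseteq> Om \<longrightarrow> cnorm (h - (\<Sum>w\<in>F'. P {w} h)) < e)"
    using assms(6) unfolding purely_atomic_def by blast
  have gen_sub: "cyl G ` paths G \<subseteq> Pow ?X" unfolding cyl_def by auto
  have OmX: "Om \<subseteq> ?X" using sigma_sets_into_sp[OF gen_sub] Om unfolding path_borel_def by blast
  have XOm: "?X - Om \<in> ?M" using Om unfolding path_borel_def by (rule sigma_sets.Compl)
  have Pbop: "\<And>A. A \<in> ?M \<Longrightarrow> bop (P A)" using Pproj unfolding is_proj_def by blast
  have Padj: "\<And>A. A \<in> ?M \<Longrightarrow> is_adj (P A) (P A)"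
  proof -
    fix A assume A: "A \<in> ?M"
    then have "is_adj (P A) (adj (P A))" using Pbop adj_is_adj by blast
    moreover have "adj (P A) = P A" using Pproj[OF A] unfolding is_proj_def by blast
    ultimately show "is_adj (P A) (P A)" by simp
  qed
  have tadj: "\<And>l. l \<in> paths G \<Longrightarrow> is_adj (t l) (adj (t l))" using tbop adj_is_adj by blast
  have tv_adj: "\<And>v. v \<in> vert G \<Longrightarrow> adj (t v) = t v" using tproj unfolding is_proj_def by blast
  have tv_idem: "\<And>v x. v \<in> vert G \<Longrightarrow> t v (t v x) = t v x"
  proof -
    fix v x assume "v \<in> vert G"
    then have "t v \<circ> t v = t v" using tproj unfolding is_proj_def by blast
    then show "t v (t v x) = t v x" by (metis comp_apply)
  qed
  have Pcyl_pt: "\<And>l x. l \<in> paths G \<Longrightarrow> P (cyl G l) x = t l (adj (t l) x)"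
    using Pcyl by (metis comp_apply)
  have tsrc_pt: "\<And>l x. l \<in> paths G \<Longrightarrow> adj (t l) (t l x) = t (src G l) x"
    using tsrc by (metis comp_apply)
  have tcomp_pt: "\<And>l m x. l \<in> paths G \<Longrightarrow> m \<in> paths G \<Longrightarrow> src G l = rng G m \<Longrightarrow> t (comp G l m) x = t l (t m x)"
    using tcomp by (metis comp_apply)
  have Pcylv: "\<And>v x. v \<in> vert G \<Longrightarrow> P (cyl G v) x = t v x"
    using Pcyl_pt kg_vp[OF kg] tv_adj tv_idem by simp
  have t_fix: "\<And>l x. l \<in> paths G \<Longrightarrow> t l (t (src G l) x) = t l x"
  proof -
    fix l x assume l: "l \<in> paths G"
    have s: "src G l \<in> vert G" using kg_rs[OF kg l] by simp
    have "t (comp G l (src G l)) x = t l (t (src G l) x)"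
      using tcomp_pt[OF l kg_vp[OF kg s]] kg_vrs[OF kg s] by simp
    then show "t l (t (src G l) x) = t l x" using kg_id[OF kg l] by simp
  qed
  have Pcyl_t: "\<And>l x. l \<in> paths G \<Longrightarrow> P (cyl G l) (t l x) = t l x"
    using Pcyl_pt tsrc_pt t_fix by simp
  have Psub1: "\<And>A B x. A \<in> ?M \<Longrightarrow> B \<in> ?M \<Longrightarrow> A \<subseteq> B \<Longrightarrow> P B (P A x) = P A x"
  proof -
    fix A B x assume AB: "A \<in> ?M" "B \<in> ?M" "A \<subseteq> B"
    have "P (B \<inter> A) = P B \<circ> P A" using Pint AB by blast
    moreover have "B \<inter> A = A" using AB by blast
    ultimately show "P B (P A x) = P A x" by (metis comp_apply)
  qed
  have Psub2: "\<And>A B x. A \<in> ?M \<Longrightarrow> B \<in> ?M \<Longrightarrow> A \<subseteq> B \<Longrightarrow> P A (P B x) = P A x"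
  proof -
    fix A B x assume AB: "A \<in> ?M" "B \<in> ?M" "A \<subseteq> B"
    have "P (A \<inter> B) = P A \<circ> P B" using Pint AB by blast
    moreover have "A \<inter> B = A" using AB by blast
    ultimately show "P A (P B x) = P A x" by (metis comp_apply)
  qed
  have Pdisj: "\<And>A B x. A \<in> ?M \<Longrightarrow> B \<in> ?M \<Longrightarrow> A \<inter> B = {} \<Longrightarrow> P A (P B x) = 0"
  proof -
    fix A B x assume AB: "A \<in> ?M" "B \<in> ?M" "A \<inter> B = {}"
    have "P (A \<inter> B) = P A \<circ> P B" using Pint AB by blast
    then show "P A (P B x) = 0" using AB(3) P0 by (metis comp_apply)
  qed
  have sing: "\<And>w. w \<in> ?X \<Longrightarrow> {w} \<in> ?M" using singleton_borel[OF kg] by blast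
  have cylM: "\<And>l. l \<in> paths G \<Longrightarrow> cyl G l \<in> ?M" using cyl_borel[OF kg] by blast
  have atom: "P {\<omega>} \<circ> T = T" if om: "\<omega> \<in> ?X" and hT: "\<forall>w\<in>Om. w \<noteq> \<omega> \<longrightarrow> P {w} \<circ> T = (\<lambda>_. 0)"
    for \<omega> and T :: "'a \<Rightarrow> 'a"
  proof (rule ext)
    fix h
    define x where "x = T h"
    have Pwx: "P {w} x = (if w = \<omega> then P {\<omega>} x else 0)" if "w \<in> Om" for w
      using hT that unfolding x_def by (metis comp_apply)
    have nOm: "P {\<omega>} x = 0" if "\<omega> \<notin> Om"
    proof -
      have "{\<omega>} \<subseteq> ?X - Om" using om that by blast
      then have "P {\<omega>} x = P {\<omega>} (P (?X - Om) x)" using Psub2[OF sing[OF om] XOm] by simp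
      then show ?thesis using OmP bop_zero[OF Pbop[OF sing[OF om]]] by simp
    qed
    have small: "cnorm (x - P {\<omega>} x) < e" if e: "e > 0" for e
    proof -
      obtain F where F: "finite F" "F \<subseteq> Om"
        and FF: "\<And>F'. finite F' \<Longrightarrow> F \<subseteq> F' \<Longrightarrow> F' \<subseteq> Om \<Longrightarrow> cnorm (x - (\<Sum>w\<in>F'. P {w} x)) < e"
        using OmS[OF e, of x] by blast
      define F' where "F' = F \<union> ({\<omega>} \<inter> Om)"
      have F': "finite F'" "F \<subseteq> F'" "F' \<subseteq> Om" using F unfolding F'_def by auto
      have "(\<Sum>w\<in>F'. P {w} x) = (\<Sum>w\<in>F'. if w = \<omega> then P {\<omega>} x else 0)"
        using Pwx F'(3) by (intro sum.cong) auto
      also have "\<dots> = (if \<omega> \<in> F' then P {\<omega>} x else 0)" using sum.delta[OF F'(1), of \<omega> "\<lambda>_. P {\<omega>} x"] by simp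
      also have "\<dots> = P {\<omega>} x" using nOm unfolding F'_def by auto
      finally show ?thesis using FF[OF F'] by simp
    qed
    have "cnorm (x - P {\<omega>} x) = 0"
    proof (rule ccontr)
      assume "cnorm (x - P {\<omega>} x) \<noteq> 0"
      then have "cnorm (x - P {\<omega>} x) > 0" using cnorm_nonneg[of "x - P {\<omega>} x"] by linarith
      then show False using small by fastforce
    qed
    then have "x = P {\<omega>} x" using cnorm_eq_0[of "x - P {\<omega>} x"] by simp
    then show "(P {\<omega>} \<circ> T) h = T h" unfolding x_def by simp
  qed
  have core: "t l \<circ> P {\<omega>} \<circ> adj (t l) = P {pcomp G l \<omega>} \<and> adj (t l) \<circ> P {pcomp G l \<omega>} \<circ> t l = P {\<omega>}"
    if l: "l \<in> paths G" and om: "\<omega> \<in> ?X" and oms: "\<omega> 0 0 = src G l" for l \<omega>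
  proof -
    define \<omega>' where "\<omega>' = pcomp G l \<omega>"
    define A where "A = adj (t l)"
    define T where "T = t l"
    define Pw where "Pw = P {\<omega>}"
    define Pw' where "Pw' = P {\<omega>'}"
    define Q where "Q = T \<circ> Pw \<circ> A"
    define Q' where "Q' = A \<circ> Pw' \<circ> T"
    let ?d = "deg G l"
    note pc = pcomp_props[OF kg l om oms, folded \<omega>'_def]
    have om': "\<omega>' \<in> ?X" using pc(1) .
    have pc4: "\<omega>' 0 (n + ?d) = comp G l (\<omega> 0 n)" for n using pc(4)[of n] by (simp add: zero_fun_def)
    have sM: "{\<omega>} \<in> ?M" "{\<omega>'} \<in> ?M" using sing om om' by auto
    note ipo = inf_props[OF kg om]
    have mu: "\<omega> 0 n \<in> paths G" "rng G (\<omega> 0 n) = src G l" "deg G (\<omega> 0 n) = n" for n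
      using ipo(1)[of 0 n] oms by auto
    have nu: "comp G l (\<omega> 0 n) \<in> paths G" "deg G (comp G l (\<omega> 0 n)) = n + ?d"
      "src G (comp G l (\<omega> 0 n)) = src G (\<omega> 0 n)" for n
      using kg_comp[OF kg l mu(1) mu(2)[symmetric]] kg_deg[OF kg l mu(1) mu(2)[symmetric]] mu(3)
      by (auto simp: add.commute)
    have om_cyl: "\<omega> \<in> cyl G (\<omega> 0 n)" for n using in_cyl[OF kg om mu(1)] .
    have om'_cyl: "\<omega>' \<in> cyl G (comp G l (\<omega> 0 n))" for n
      using om' pc4[of n] nu(2)[of n] unfolding cyl_def by (simp add: zero_fun_def)
    have om'_cyll: "\<omega>' \<in> cyl G l" using om' pc(2) unfolding cyl_def by simp
    have sl: "src G l \<in> vert G" using kg_rs[OF kg l] by simp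
    have om_cyls: "\<omega> \<in> cyl G (src G l)" using om oms kg_degv[OF kg sl] unfolding cyl_def by simp
    have Pw_mu: "Pw y = t (\<omega> 0 n) (adj (t (\<omega> 0 n)) (Pw y))" for n y
      unfolding Pw_def using Psub1[OF sM(1) cylM[OF mu(1)[of n]], of y] om_cyl[of n] Pcyl_pt[OF mu(1)] by simp
    have Pw'_nu: "Pw' y = t (comp G l (\<omega> 0 n)) (adj (t (comp G l (\<omega> 0 n))) (Pw' y))" for n y
      unfolding Pw'_def using Psub1[OF sM(2) cylM[OF nu(1)[of n]], of y] om'_cyl[of n] Pcyl_pt[OF nu(1)] by simp
    have Q1: "\<forall>w\<in>Om. w \<noteq> \<omega>' \<longrightarrow> P {w} \<circ> Q = (\<lambda>_. 0)"
    proof (intro ballI impI ext)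
      fix w x assume w: "w \<in> Om" and ne: "w \<noteq> \<omega>'"
      have wX: "w \<in> ?X" using w OmX by blast
      obtain n where n: "w 0 (n + ?d) \<noteq> \<omega>' 0 (n + ?d)"
        using inf_eq2[OF kg wX om', of ?d] ne by blast
      let ?\<mu> = "\<omega> 0 n" let ?\<nu> = "comp G l (\<omega> 0 n)"
      have wnot: "{w} \<inter> cyl G ?\<nu> = {}" using n pc4[of n] nu(2)[of n] unfolding cyl_def by auto
      define z where "z = adj (t ?\<mu>) (Pw (A x))"
      have "Q x = T (t ?\<mu> z)" unfolding Q_def z_def using Pw_mu[of "A x" n] by simp
      also have "\<dots> = t ?\<nu> z" unfolding T_def using tcomp_pt[OF l mu(1) mu(2)[symmetric]] by simp
      finally have Qx: "Q x = t ?\<nu> z" .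
      have "P {w} (Q x) = P {w} (P (cyl G ?\<nu>) (t ?\<nu> z))" using Qx Pcyl_t[OF nu(1)] by simp
      also have "\<dots> = 0" using Pdisj[OF sing[OF wX] cylM[OF nu(1)] wnot] .
      finally show "(P {w} \<circ> Q) x = 0" by simp
    qed
    have Q1': "Pw' \<circ> Q = Q" unfolding Pw'_def using atom[OF om' Q1] .
    have Q2: "\<forall>w\<in>Om. w \<noteq> \<omega> \<longrightarrow> P {w} \<circ> Q' = (\<lambda>_. 0)"
    proof (intro ballI impI ext)
      fix w x assume w: "w \<in> Om" and ne: "w \<noteq> \<omega>"
      have wX: "w \<in> ?X" using w OmX by blast
      obtain n where n: "w 0 n \<noteq> \<omega> 0 n"
        using inf_eq[OF kg wX om] ne by blast
      let ?\<mu> = "\<omega> 0 n" let ?\<nu> = "comp G l (\<omega> 0 n)"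
      have wnot: "{w} \<inter> cyl G ?\<mu> = {}" using n mu(3)[of n] unfolding cyl_def by auto
      define z where "z = adj (t ?\<nu>) (Pw' (T x))"
      have "Q' x = A (t ?\<nu> z)" unfolding Q'_def z_def using Pw'_nu[of "T x" n] by simp
      also have "\<dots> = A (T (t ?\<mu> z))" unfolding T_def using tcomp_pt[OF l mu(1) mu(2)[symmetric]] by simp
      also have "\<dots> = t (src G l) (t ?\<mu> z)" unfolding A_def T_def using tsrc_pt[OF l] by simp
      also have "\<dots> = t ?\<mu> z"
      proof -
        have "t (comp G (src G l) ?\<mu>) z = t (src G l) (t ?\<mu> z)"
          using tcomp_pt[OF kg_vp[OF kg sl] mu(1)] kg_vrs[OF kg sl] mu(2) by simp
        moreover have "comp G (src G l) ?\<mu> = ?\<mu>" using kg_id[OF kg mu(1)] mu(2) by simp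
        ultimately show ?thesis by simp
      qed
      finally have Qx: "Q' x = t ?\<mu> z" .
      have "P {w} (Q' x) = P {w} (P (cyl G ?\<mu>) (t ?\<mu> z))" using Qx Pcyl_t[OF mu(1)] by simp
      also have "\<dots> = 0" using Pdisj[OF sing[OF wX] cylM[OF mu(1)] wnot] .
      finally show "(P {w} \<circ> Q') x = 0" by simp
    qed
    have Q2': "Pw \<circ> Q' = Q'" unfolding Pw_def using atom[OF om Q2] .
    have Q3: "Pw' = Q \<circ> Pw'"
    proof (rule ext)
      fix x
      have a: "Pw' x = P (cyl G l) (Pw' (P (cyl G l) x))"
        unfolding Pw'_def using Psub1[OF sM(2) cylM[OF l]] Psub2[OF sM(2) cylM[OF l]] om'_cyll by simp
      also have "\<dots> = T (Q' (A x))" unfolding Q'_def T_def A_def using Pcyl_pt[OF l] by simp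
      also have "\<dots> = T (Pw (Q' (A x)))" using fun_cong[OF Q2', of "A x"] by simp
      also have "\<dots> = Q (Pw' (P (cyl G l) x))" unfolding Q_def Q'_def T_def A_def using Pcyl_pt[OF l] by simp
      also have "\<dots> = Q (Pw' x)" unfolding Pw'_def using Psub2[OF sM(2) cylM[OF l]] om'_cyll by simp
      finally show "Pw' x = (Q \<circ> Pw') x" by simp
    qed
    have adjQ: "is_adj Q Q"
    proof -
      have "is_adj (T \<circ> Pw) (Pw \<circ> A)" unfolding T_def A_def Pw_def
        using is_adj_comp[OF tadj[OF l] Padj[OF sM(1)]] .
      then have "is_adj ((T \<circ> Pw) \<circ> A) (T \<circ> (Pw \<circ> A))"
        using is_adj_comp[OF _ is_adj_sym[OF tadj[OF l]]] unfolding T_def A_def by blast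
      then show ?thesis unfolding Q_def by (simp add: comp_assoc)
    qed
    have "is_adj (Pw' \<circ> Q) (Q \<circ> Pw')" using is_adj_comp[OF Padj[OF sM(2)] adjQ] unfolding Pw'_def .
    then have "is_adj Q (Q \<circ> Pw')" using Q1' by simp
    then have "Q \<circ> Pw' = Q" using is_adj_unique adjQ by blast
    then have QP: "Q = Pw'" using Q3 by simp
    have part2: "A \<circ> Pw' \<circ> T = Pw"
    proof (rule ext)
      fix x
      have "(A \<circ> Pw' \<circ> T) x = A (T (Pw (A (T x))))" using fun_cong[OF QP, of "T x"] unfolding Q_def by simp
      also have "\<dots> = t (src G l) (Pw (t (src G l) x))" unfolding A_def T_def using tsrc_pt[OF l] by simp
      also have "\<dots> = P (cyl G (src G l)) (Pw (P (cyl G (src G l)) x))" using Pcylv[OF sl] by simp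
      also have "\<dots> = Pw x" unfolding Pw_def
        using Psub1[OF sM(1) cylM[OF kg_vp[OF kg sl]]] Psub2[OF sM(1) cylM[OF kg_vp[OF kg sl]]] om_cyls by simp
      finally show "(A \<circ> Pw' \<circ> T) x = Pw x" .
    qed
    show ?thesis using QP part2 unfolding Q_def A_def T_def Pw_def Pw'_def \<omega>'_def by simp
  qed
  have partA: "\<forall>l\<in>paths G. \<forall>w\<in>inf_paths G. w 0 0 = src G l \<longrightarrow>
            t l \<circ> P {w} \<circ> adj (t l) = P {pcomp G l w}"
    using core by blast
  have partB: "\<forall>w\<in>inf_paths G. \<forall>n. adj (t (w 0 n)) \<circ> P {w} \<circ> t (w 0 n) = P {shift n w}"
  proof (intro ballI allI)
    fix w n assume w: "w \<in> ?X"
    note ps = pcomp_shift[OF kg w, of n]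
    show "adj (t (w 0 n)) \<circ> P {w} \<circ> t (w 0 n) = P {shift n w}"
      using core[OF ps(2) shift_inf[OF kg w] ps(3)] ps(1) by simp
  qed
  have partC: "\<forall>n. \<forall>e\<in>paths G. \<forall>w\<in>inf_paths G. deg G e = n \<longrightarrow> e \<noteq> w 0 n \<longrightarrow>
            adj (t e) \<circ> P {w} \<circ> t e = (\<lambda>_. 0)"
  proof (intro allI ballI impI ext)
    fix n e w x assume e: "e \<in> paths G" and w: "w \<in> ?X" and de: "deg G e = n" and ne: "e \<noteq> w 0 n"
    have mu: "w 0 n \<in> paths G" "deg G (w 0 n) = n" using inf_props(1)[OF kg w, of 0 n] by auto
    have disj: "cyl G (w 0 n) \<inter> cyl G e = {}" using ne de mu(2) unfolding cyl_def by auto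
    have wc: "w \<in> cyl G (w 0 n)" using in_cyl[OF kg w mu(1)] .
    have "P {w} (t e x) = P {w} (P (cyl G (w 0 n)) (P (cyl G e) (t e x)))"
      using Psub2[OF sing[OF w] cylM[OF mu(1)]] wc Pcyl_t[OF e] by simp
    also have "\<dots> = P {w} 0" using Pdisj[OF cylM[OF mu(1)] cylM[OF e] disj] by simp
    also have "\<dots> = 0" using bop_zero[OF Pbop[OF sing[OF w]]] .
    finally show "(adj (t e) \<circ> P {w} \<circ> t e) x = 0"
      using is_adj_S0[OF tadj[OF e]] by simp
  qed
  show ?thesis using partA partB partC by blast
qed


end
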